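(* Let $R$ be a commutative $E$-algebra and $\lambda:E[\Sigma^+]\to R$ a ring homomorphism. If there exists $\eta\in\Sigma^{++}$ with $\lambda(\eta)\in R^\times$, then $\lambda(\delta)\in R^\times$ for all $\delta\in\Sigma^{++}$.
   Context: $L$ is a finite extension of $\mathbb Q_p$ and $E\supseteq L$ a field. $G$ is connected reductive over $L$, $S$ a maximal split torus, $\Delta$ simple relative roots defining a minimal parabolic, $P$ a parabolic containing it with Levi $M$, $T=Z(M)\cap S$; a positive root $\alpha$ is free if $-\alpha$ is not a root of $P$, and $\Delta_f$ is the set of free simple roots. $M_0\subseteq M(L)$ is compact open. $\Sigma\subseteq T(L)$ is the free abelian group generated by finitely many elements whose images form a $\mathbb Q$-basis of $(T(L)/T(L)\cap M_0)\otimes\mathbb Q$; $\Sigma^+$ (resp. $\Sigma^{++}$) is the set of $z\in\Sigma$ with $|\alpha(z)|\ge1$ (resp. $|\alpha(z)|>1$) for all $\alpha\in\Delta_f$; $E[\Sigma^+]$ is the monoid algebra. *)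

theory Defs
  imports Complex_Main "HOL-Library.Poly_Mapping" "HOL-Library.Function_Algebras"
begin

text \<open>The lattice \<Sigma> is modelled as the free abelian group \<open>'n \<Rightarrow> int\<close> (with \<open>'n\<close> a finite
  type indexing the chosen free generators), written additively.  The absolute values
  \<open>|\<alpha>(z)|\<close> for \<open>\<alpha>\<close> in the set of free simple roots are given by a family
  \<open>absv \<alpha> :: ('n \<Rightarrow> int) \<Rightarrow> real\<close>, assumed to be homomorphisms into the positive reals.\<close>

definition Sigma_plus :: "('i \<Rightarrow> ('n \<Rightarrow> int) \<Rightarrow> real) \<Rightarrow> 'i set \<Rightarrow> ('n \<Rightarrow> int) set" where
  "Sigma_plus absv Df = {z. \<forall>\<alpha>\<in>Df. absv \<alpha> z \<ge> 1}"

definition Sigma_pp :: "('i \<Rightarrow> ('n \<Rightarrow> int) \<Rightarrow> real) \<Rightarrow> 'i set \<Rightarrow> ('n \<Rightarrow> int) set" where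
  "Sigma_pp absv Df = {z. \<forall>\<alpha>\<in>Df. absv \<alpha> z > 1}"

text \<open>The monoid algebra \<open>E[\<Sigma>^+]\<close>, as the subring of the group algebra \<open>E[\<Sigma>] = (\<Sigma> \<Rightarrow>\<^sub>0 E)\<close>
  of finitely supported functions supported in \<open>\<Sigma>^+\<close>.\<close>
definition monoid_alg :: "('n \<Rightarrow> int) set \<Rightarrow> (('n \<Rightarrow> int) \<Rightarrow>\<^sub>0 'e::field) set" where
  "monoid_alg S = {f. Poly_Mapping.keys f \<subseteq> S}"

definition ring_hom_on :: "'a::ring_1 set \<Rightarrow> ('a \<Rightarrow> 'b::ring_1) \<Rightarrow> bool" where
  "ring_hom_on A h \<longleftrightarrow> h 1 = 1 \<and>
     (\<forall>x\<in>A. \<forall>y\<in>A. h (x + y) = h x + h y \<and> h (x * y) = h x * h y)"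

end

theory Submission
  imports Defs
begin

theorem mainTheorem17:
  fixes absv :: "'i \<Rightarrow> ('n::finite \<Rightarrow> int) \<Rightarrow> real"
    and Df :: "'i set"
    and alg :: "'e::field \<Rightarrow> 'r::comm_ring_1"
    and lam :: "(('n \<Rightarrow> int) \<Rightarrow>\<^sub>0 'e) \<Rightarrow> 'r"
    and \<eta> \<delta> :: "'n \<Rightarrow> int"
  assumes Df_fin: "finite Df"
    and absv_pos: "\<And>\<alpha> z. \<alpha> \<in> Df \<Longrightarrow> absv \<alpha> z > 0"
    and absv_hom: "\<And>\<alpha> x y. \<alpha> \<in> Df \<Longrightarrow> absv \<alpha> (x + y) = absv \<alpha> x * absv \<alpha> y"
    and alg_hom: "alg 1 = 1" "\<And>a b. alg (a + b) = alg a + alg b" "\<And>a b. alg (a * b) = alg a * alg b"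
    and lam_hom: "ring_hom_on (monoid_alg (Sigma_plus absv Df)) lam"
    and eta: "\<eta> \<in> Sigma_pp absv Df"
    and eta_unit: "lam (Poly_Mapping.single \<eta> 1) dvd 1"
    and delta: "\<delta> \<in> Sigma_pp absv Df"
  shows "lam (Poly_Mapping.single \<delta> 1) dvd 1"
proof -
  let ?S = "Sigma_plus absv Df"
  have a0: "absv \<alpha> 0 = 1" if "\<alpha> \<in> Df" for \<alpha>
  proof -
    have "absv \<alpha> 0 = absv \<alpha> 0 * absv \<alpha> 0" using absv_hom[OF that, of 0 0] by simp
    with absv_pos[OF that, of 0] show ?thesis by simp
  qed
  have apow: "absv \<alpha> (\<Sum>i<m. \<eta>) = absv \<alpha> \<eta> ^ m" if "\<alpha> \<in> Df" for \<alpha> m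
  proof (induction m)
    case 0 show ?case by (simp only: sum.empty lessThan_0 a0[OF that] power_0)
  next
    case (Suc m) show ?case
      by (simp only: sum.lessThan_Suc absv_hom[OF that] Suc power_Suc mult.commute)
  qed
  have aneg: "absv \<alpha> (- d) = 1 / absv \<alpha> d" if "\<alpha> \<in> Df" for \<alpha> d
  proof -
    have "absv \<alpha> (-d) * absv \<alpha> d = 1" using absv_hom[OF that, of "-d" d] a0[OF that] by simp
    with absv_pos[OF that, of d] show ?thesis by (simp add: field_simps)
  qed
  have keys1: "Poly_Mapping.keys (Poly_Mapping.single a (1::'e)) = {a}" for a by simp
  have inS: "Poly_Mapping.single a (1::'e) \<in> monoid_alg ?S" if "a \<in> ?S" for a
    using that by (simp add: monoid_alg_def)
  have etaS: "\<eta> \<in> ?S" using eta by (auto simp: Sigma_plus_def Sigma_pp_def less_imp_le)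
  have deltaS: "\<delta> \<in> ?S" using delta by (auto simp: Sigma_plus_def Sigma_pp_def less_imp_le)
  have sumS: "(\<Sum>i<m. \<eta>) \<in> ?S" for m
  proof -
    { fix \<alpha> assume "\<alpha> \<in> Df"
      then have "absv \<alpha> \<eta> \<ge> 1" using etaS by (simp add: Sigma_plus_def)
      then have "absv \<alpha> (\<Sum>i<m. \<eta>) \<ge> 1" using apow[OF \<open>\<alpha> \<in> Df\<close>] by (simp add: one_le_power) }
    then show ?thesis by (simp add: Sigma_plus_def)
  qed
  have lhom1: "lam 1 = 1" and lmul: "\<And>x y. x \<in> monoid_alg ?S \<Longrightarrow> y \<in> monoid_alg ?S \<Longrightarrow> lam (x*y) = lam x * lam y"
    using lam_hom by (auto simp: ring_hom_on_def)
  have lpow: "lam (Poly_Mapping.single (\<Sum>i<m. \<eta>) 1) = lam (Poly_Mapping.single \<eta> 1) ^ m" for m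
  proof (induction m)
    case 0 then show ?case using lhom1 by (simp only: sum.empty lessThan_0 single_one power_0)
  next
    case (Suc m)
    have "Poly_Mapping.single (\<Sum>i<Suc m. \<eta>) (1::'e) = Poly_Mapping.single (\<Sum>i<m. \<eta>) 1 * Poly_Mapping.single \<eta> 1"
      by (simp only: sum.lessThan_Suc mult_single mult_1)
    then show ?case using lmul[OF inS[OF sumS] inS[OF etaS], of m] Suc
      by (simp only: power_Suc mult.commute)
  qed
  have "\<forall>\<alpha>\<in>Df. \<exists>k. absv \<alpha> \<delta> < absv \<alpha> \<eta> ^ k"
    using eta by (auto simp: Sigma_pp_def intro: real_arch_pow)
  then obtain k where k: "\<And>\<alpha>. \<alpha> \<in> Df \<Longrightarrow> absv \<alpha> \<delta> < absv \<alpha> \<eta> ^ k \<alpha>" by metis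
  define m where "m = sum k Df"
  have mge: "absv \<alpha> \<delta> \<le> absv \<alpha> \<eta> ^ m" if "\<alpha> \<in> Df" for \<alpha>
  proof -
    have "k \<alpha> \<le> m" unfolding m_def using Df_fin that by (simp add: member_le_sum)
    moreover have "absv \<alpha> \<eta> > 1" using eta that by (simp add: Sigma_pp_def)
    ultimately have "absv \<alpha> \<eta> ^ k \<alpha> \<le> absv \<alpha> \<eta> ^ m" by (simp add: power_increasing)
    with k[OF that] show ?thesis by simp
  qed
  define z where "z = (\<Sum>i<m. \<eta>) - \<delta>"
  have zS: "z \<in> ?S"
  proof -
    { fix \<alpha> assume a: "\<alpha> \<in> Df"
      have "absv \<alpha> z = absv \<alpha> \<eta> ^ m / absv \<alpha> \<delta>"
        unfolding z_def using absv_hom[OF a, of "\<Sum>i<m. \<eta>" "-\<delta>"] apow[OF a] aneg[OF a]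
        by simp
      moreover have "absv \<alpha> \<delta> > 0" using absv_pos[OF a] .
      ultimately have "absv \<alpha> z \<ge> 1" using mge[OF a] by simp }
    then show ?thesis by (simp add: Sigma_plus_def)
  qed
  have "Poly_Mapping.single (\<Sum>i<m. \<eta>) (1::'e) = Poly_Mapping.single z 1 * Poly_Mapping.single \<delta> 1"
    by (simp add: mult_single z_def)
  then have "lam (Poly_Mapping.single \<eta> 1) ^ m = lam (Poly_Mapping.single z 1) * lam (Poly_Mapping.single \<delta> 1)"
    using lpow[of m] lmul[OF inS[OF zS] inS[OF deltaS]] by metis
  then have "lam (Poly_Mapping.single \<delta> 1) dvd lam (Poly_Mapping.single \<eta> 1) ^ m"
    by (metis dvd_triv_right)
  moreover have "lam (Poly_Mapping.single \<eta> 1) ^ m dvd 1" using eta_unit by (metis dvd_power_same power_one)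
  ultimately show ?thesis by (rule dvd_trans)
qed

end
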